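(* Let $n>5$ be prime and let $\gamma:\mathbb{Z}_n\to[0,1]$ be a probability distribution with $\gamma(k)\in\mathbb{Q}$ for all $k\in\mathbb{Z}_n$. If the random walk on $\mathbb{Z}_n$ with step distribution $\gamma$ is reconstructive, then the Fourier coefficients $\{\hat{\gamma}(x)\}_{x\in\mathbb{Z}_n}$ are pairwise distinct.
   Context: $\mathbb{Z}_n=\mathbb{Z}/n\mathbb{Z}$. The random walk $v(t)$ with step distribution $\gamma$ on a finite abelian group $H$ has $v(1)$ uniform on $H$ and $\mathbb{P}(v(t+1)-v(t)=k)=\gamma(k)$, steps independent. A labeling (scenery) is a function $f:H\to\{0,1\}$. The walk is called reconstructive if, for any two labelings $f_1,f_2$, the distributions of the sequences $\{f_1(v(t))\}_{t\ge1}$ and $\{f_2(v(t))\}_{t\ge1}$ coincide only if $f_1$ is a shift of $f_2$, i.e. there is $\ell\in H$ with $f_1(k)=f_2(k+\ell)$ for all $k$. The Fourier transform is $\hat{\gamma}(x)=\sum_{k\in\mathbb{Z}_n}\omega_n^{kx}\gamma(k)$ with $\omega_n=e^{-2\pi i/n}$. *)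

theory Defs
  imports "HOL-Analysis.Analysis"
begin

text \<open>Z_n is represented by {0..<n} (nat, arithmetic mod n). A step distribution is
  gamma :: nat => real, meaningful on {0..<n}. A labeling is f :: nat => bool
  (only its values on {0..<n} matter).\<close>

definition step_dist :: "nat \<Rightarrow> (nat \<Rightarrow> real) \<Rightarrow> bool" where
  "step_dist n \<gamma> \<longleftrightarrow> (\<forall>k<n. 0 \<le> \<gamma> k \<and> \<gamma> k \<le> 1) \<and> (\<Sum>k<n. \<gamma> k) = 1"

text \<open>walk_prob n gamma f w x: probability that, starting at x, the observed labels
  f(v(1)),...,f(v(m)) equal the word w (with v(1) = x).\<close>
fun walk_prob :: "nat \<Rightarrow> (nat \<Rightarrow> real) \<Rightarrow> (nat \<Rightarrow> bool) \<Rightarrow> bool list \<Rightarrow> nat \<Rightarrow> real" where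
  "walk_prob n \<gamma> f [] x = 1"
| "walk_prob n \<gamma> f (b # ws) x =
     (if f x = b then (\<Sum>k<n. \<gamma> k * walk_prob n \<gamma> f ws ((x + k) mod n)) else 0)"

text \<open>Finite-dimensional distribution of the label sequence: v(1) uniform on Z_n.\<close>
definition seq_prob :: "nat \<Rightarrow> (nat \<Rightarrow> real) \<Rightarrow> (nat \<Rightarrow> bool) \<Rightarrow> bool list \<Rightarrow> real" where
  "seq_prob n \<gamma> f w = (\<Sum>x<n. walk_prob n \<gamma> f w x) / real n"

text \<open>Two label sequences have the same distribution iff all finite-dimensional
  (cylinder) probabilities agree.\<close>
definition same_law :: "nat \<Rightarrow> (nat \<Rightarrow> real) \<Rightarrow> (nat \<Rightarrow> bool) \<Rightarrow> (nat \<Rightarrow> bool) \<Rightarrow> bool" where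
  "same_law n \<gamma> f1 f2 \<longleftrightarrow> (\<forall>w. seq_prob n \<gamma> f1 w = seq_prob n \<gamma> f2 w)"

definition is_shift :: "nat \<Rightarrow> (nat \<Rightarrow> bool) \<Rightarrow> (nat \<Rightarrow> bool) \<Rightarrow> bool" where
  "is_shift n f1 f2 \<longleftrightarrow> (\<exists>l<n. \<forall>k<n. f1 k = f2 ((k + l) mod n))"

definition reconstructive :: "nat \<Rightarrow> (nat \<Rightarrow> real) \<Rightarrow> bool" where
  "reconstructive n \<gamma> \<longleftrightarrow> (\<forall>f1 f2. same_law n \<gamma> f1 f2 \<longrightarrow> is_shift n f1 f2)"

definition fourier :: "nat \<Rightarrow> (nat \<Rightarrow> real) \<Rightarrow> nat \<Rightarrow> complex" where
  "fourier n \<gamma> x = (\<Sum>k<n. exp (- 2 * pi * \<i> * of_nat (k * x) / of_nat n) * of_real (\<gamma> k))"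

end

theory Submission
  imports Defs "HOL-Computational_Algebra.Computational_Algebra" "HOL-Number_Theory.Cong"
begin


lemma eis_aux:
  fixes f A B :: "int poly" and p :: int
  assumes pr: "prime p" and fAB: "f = A * B" and lc: "\<not> p dvd lead_coeff f"
    and cf: "\<forall>k<degree f. p dvd coeff f k" and dB: "degree B > 0"
    and a0: "p dvd coeff A 0" and b0: "\<not> p dvd coeff B 0"
  shows False
proof -
  have f0: "f \<noteq> 0" using lc by auto
  hence A0: "A \<noteq> 0" and B0: "B \<noteq> 0" using fAB by auto
  have degf: "degree f = degree A + degree B" using fAB A0 B0 by (simp add: degree_mult_eq)
  have "lead_coeff f = lead_coeff A * lead_coeff B" using fAB by (simp add: lead_coeff_mult)
  hence lA: "\<not> p dvd coeff A (degree A)" using lc by auto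
  define k where "k = (LEAST i. \<not> p dvd coeff A i)"
  have kA: "\<not> p dvd coeff A k" unfolding k_def by (rule LeastI[of _ "degree A"]) (rule lA)
  have kle: "k \<le> degree A" unfolding k_def by (rule Least_le) (rule lA)
  have below: "\<And>i. i < k \<Longrightarrow> p dvd coeff A i" unfolding k_def using not_less_Least by blast
  have kdeg: "k < degree f" using kle degf dB by simp
  have "coeff f k = (\<Sum>i\<le>k. coeff A i * coeff B (k - i))" using fAB by (simp add: coeff_mult)
  also have "\<dots> = (\<Sum>i<k. coeff A i * coeff B (k - i)) + coeff A k * coeff B 0"
    by (simp add: lessThan_Suc_atMost[symmetric])
  finally have eq: "coeff f k = (\<Sum>i<k. coeff A i * coeff B (k - i)) + coeff A k * coeff B 0" .
  have s: "p dvd (\<Sum>i<k. coeff A i * coeff B (k - i))"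
    by (rule dvd_sum) (simp add: below)
  have "p dvd coeff f k" using cf kdeg by auto
  hence "p dvd coeff A k * coeff B 0" using eq s by (metis dvd_add_right_iff)
  thus False using pr kA b0 by (simp add: prime_dvd_mult_iff)
qed

lemma eisenstein_no_factor:
  fixes f A B :: "int poly" and p :: int
  assumes pr: "prime p" and fAB: "f = A * B" and lc: "\<not> p dvd lead_coeff f"
    and cf: "\<forall>k<degree f. p dvd coeff f k" and c0: "\<not> p^2 dvd coeff f 0"
  shows "degree A = 0 \<or> degree B = 0"
proof (rule ccontr)
  assume "\<not> (degree A = 0 \<or> degree B = 0)"
  hence dA: "degree A > 0" and dB: "degree B > 0" by auto
  have f0: "f \<noteq> 0" using lc by auto
  hence A0: "A \<noteq> 0" and B0: "B \<noteq> 0" using fAB by auto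
  have degf: "degree f = degree A + degree B" using fAB A0 B0 by (simp add: degree_mult_eq)
  have e0: "coeff f 0 = coeff A 0 * coeff B 0" using fAB by (simp add: coeff_mult_0)
  have "p dvd coeff f 0" using cf degf dA by auto
  hence "p dvd coeff A 0 \<or> p dvd coeff B 0" using e0 pr by (simp add: prime_dvd_mult_iff)
  moreover have "\<not> (p dvd coeff A 0 \<and> p dvd coeff B 0)"
  proof
    assume "p dvd coeff A 0 \<and> p dvd coeff B 0"
    hence "p * p dvd coeff A 0 * coeff B 0" by (simp add: mult_dvd_mono)
    thus False using c0 e0 by (simp add: power2_eq_square)
  qed
  moreover have "f = B * A" using fAB by (simp add: mult.commute)
  ultimately show False
    using eis_aux[OF pr fAB lc cf dB] eis_aux[OF pr \<open>f = B * A\<close> lc cf dA] by blast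
qed

definition cyc :: "nat \<Rightarrow> int poly" where "cyc p = (\<Sum>m<p. [:0,1:]^m)"

lemma pcompose_power_left: "pcompose (q ^ m) r = (pcompose q r) ^ m"
  by (induction m) (simp_all add: pcompose_mult pcompose_1)

lemma cyc_mult: "([:0,1:] - 1) * cyc p = [:0,1:]^p - 1"
  unfolding cyc_def by (simp add: power_diff_1_eq)

lemma coeff_monoms: "coeff (\<Sum>m<p. monom (c m) m) i = (if i < p then c i else 0)"
  by (simp add: coeff_sum coeff_monom)

lemma cyc_monom: "cyc p = (\<Sum>m<p. monom 1 m)"
  unfolding cyc_def by (simp add: monom_altdef)

lemma coeff_cyc: "coeff (cyc p) i = (if i < p then 1 else 0)"
  unfolding cyc_monom coeff_monoms by simp

lemma degree_cyc: "p > 0 \<Longrightarrow> degree (cyc p) = p - 1"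
proof -
  assume p: "p > 0"
  have "degree (cyc p) \<le> p - 1" by (rule degree_le) (auto simp: coeff_cyc)
  moreover have "coeff (cyc p) (p - 1) \<noteq> 0" using p by (simp add: coeff_cyc)
  hence "p - 1 \<le> degree (cyc p)" by (rule le_degree)
  ultimately show ?thesis by simp
qed

lemma psi_eq: "pCons 0 (pcompose (cyc p) [:1,1:]) = [:1,1:]^p - 1"
proof -
  have "pcompose (([:0,1:] - 1) * cyc p) [:1,1:] = pcompose ([:0,1:]^p - 1) [:1,1:]"
    by (simp add: cyc_mult)
  hence "(pcompose ([:0,1:] - 1) [:1,1:]) * pcompose (cyc p) [:1,1:] = [:1,1:]^p - 1"
    by (simp add: pcompose_mult pcompose_diff pcompose_power_left pcompose_1 pcompose_pCons)
  moreover have "pcompose ([:0,1:] - 1) [:1::int,1:] = [:0,1:]"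
    by (simp add: pcompose_diff pcompose_1 pcompose_pCons one_pCons)
  ultimately show ?thesis by simp
qed

lemma coeff_psi: "coeff (pcompose (cyc p) [:1,1:]) k = (if Suc k \<le> p then int (p choose Suc k) else 0)"
proof -
  have "coeff (pcompose (cyc p) [:1,1:]) k = coeff (pCons 0 (pcompose (cyc p) [:1,1:])) (Suc k)" by simp
  also have "\<dots> = coeff ([:1,1:]^p) (Suc k) - coeff 1 (Suc k)" by (simp only: psi_eq coeff_diff)
  also have "\<dots> = (if Suc k \<le> p then int (p choose Suc k) else 0)"
    by (auto simp: coeff_linear_poly_power coeff_1 coeff_eq_0 degree_linear_power)
  finally show ?thesis .
qed

lemma cyc_no_factor:
  assumes pr: "prime p" and fac: "cyc p = A * B"
  shows "degree A = 0 \<or> degree B = 0"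
proof -
  let ?q = "[:1::int,1:]"
  let ?P = "pcompose (cyc p) ?q"
  have p0: "p > 1" using pr prime_gt_1_nat by blast
  have dq: "degree ?q = 1" by simp
  have dP: "degree ?P = p - 1" using p0 by (simp add: degree_pcompose degree_cyc)
  have fac': "?P = pcompose A ?q * pcompose B ?q" using fac by (simp add: pcompose_mult)
  have prI: "prime (int p)" using pr by simp
  have lc: "\<not> int p dvd lead_coeff ?P" using p0 dP by (simp add: coeff_psi)
  have cf: "\<forall>k<degree ?P. int p dvd coeff ?P k"
  proof (intro allI impI)
    fix k assume "k < degree ?P"
    hence "Suc k < p" using dP by simp
    hence "p dvd (p choose Suc k)" using pr by (intro dvd_choose_prime) auto
    thus "int p dvd coeff ?P k" using \<open>Suc k < p\<close> by (simp add: coeff_psi)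
  qed
  have c0: "\<not> (int p)^2 dvd coeff ?P 0"
  proof
    assume "(int p)^2 dvd coeff ?P 0"
    moreover have "coeff ?P 0 = int p" using p0 by (subst coeff_psi) simp
    ultimately have "int p * int p dvd int p * 1" by (simp add: power2_eq_square)
    hence "int p dvd 1" using p0 by (subst (asm) dvd_mult_cancel_left) auto
    thus False using p0 by simp
  qed
  from eisenstein_no_factor[OF prI fac' lc cf c0]
  show ?thesis by (simp add: degree_pcompose)
qed




abbreviation ip :: "int poly \<Rightarrow> 'a::comm_ring_1 poly" where "ip \<equiv> map_poly of_int"

lemma ip_add: "ip (p + q) = (ip p + ip q :: 'a::comm_ring_1 poly)"
  by (rule poly_eqI) (simp add: coeff_map_poly)
lemma ip_diff: "ip (p - q) = (ip p - ip q :: 'a::comm_ring_1 poly)"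
  by (rule poly_eqI) (simp add: coeff_map_poly)
lemma ip_mult: "ip (p * q) = (ip p * ip q :: 'a::comm_ring_1 poly)"
  by (rule poly_eqI) (simp add: coeff_map_poly coeff_mult)
lemma ip_smult: "ip (smult c q) = (smult (of_int c) (ip q) :: 'a::comm_ring_1 poly)"
  by (rule poly_eqI) (simp add: coeff_map_poly)
lemma ip_sum: "ip (sum f A) = (\<Sum>x\<in>A. ip (f x) :: 'a::comm_ring_1 poly)"
  by (rule poly_eqI) (simp add: coeff_map_poly coeff_sum)
lemma ip_x: "ip [:0,1:] = ([:0,1:] :: 'a::comm_ring_1 poly)"
  by (simp add: map_poly_pCons)
lemma ip_monom: "ip (monom c n) = (monom (of_int c) n :: 'a::comm_ring_1 poly)"
  by (simp add: map_poly_monom)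
lemma ip_power: "ip (q ^ m) = (ip q ^ m :: 'a::comm_ring_1 poly)"
  by (induction m) (simp_all add: ip_mult)

lemma poly_cyc:
  fixes z :: complex
  assumes "z^p = 1" "z \<noteq> 1"
  shows "poly (ip (cyc p)) z = 0"
proof -
  have "poly (ip (cyc p)) z = (\<Sum>m<p. z^m)"
    unfolding cyc_def by (simp add: ip_sum poly_sum ip_power ip_x)
  also have "\<dots> = 0"
  proof -
    have "(z - 1) * (\<Sum>m<p. z^m) = 0" using assms by (simp add: power_diff_1_eq[symmetric])
    thus ?thesis using assms by simp
  qed
  finally show ?thesis .
qed

lemma content_cyc: "p > 0 \<Longrightarrow> content (cyc p) = 1"
proof -
  assume p: "p > 0"
  have "content (cyc p) dvd coeff (cyc p) 0" by (rule content_dvd_coeff)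
  hence "content (cyc p) dvd 1" using p by (simp add: coeff_cyc)
  hence "normalize (content (cyc p)) = 1" by (simp add: is_unit_normalize)
  thus ?thesis by (metis normalize_content)
qed

lemma root_deg:
  fixes z :: complex
  assumes pr: "prime p" and z: "z^p = 1" "z \<noteq> 1"
  shows "A \<noteq> 0 \<Longrightarrow> poly (ip (A::int poly)) z = 0 \<Longrightarrow> p - 1 \<le> degree A"
proof (induction "degree A" arbitrary: A rule: less_induct)
  case (less A)
  have p0: "p > 1" using pr prime_gt_1_nat by blast
  define r where "r = pseudo_mod (cyc p) A"
  obtain a q where a: "a \<noteq> 0" and eq: "smult a (cyc p) = A * q + r"
    using pseudo_mod(1)[OF less.prems(1)] unfolding r_def by blast
  have rd: "r = 0 \<or> degree r < degree A"
    using pseudo_mod(2)[OF less.prems(1)] unfolding r_def by blast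
  have "poly (ip (smult a (cyc p))) z = poly (ip (A * q + r)) z"
    using eq by simp
  hence rz: "poly (ip r) z = 0"
    using poly_cyc[OF z] less.prems(2) by (simp add: ip_add ip_mult ip_smult)
  show ?case
  proof (cases "r = 0")
    case False
    with rd have "degree r < degree A" by simp
    with less.hyps[OF this False rz] show ?thesis by simp
  next
    case True
    hence eq2: "smult a (cyc p) = A * q" using eq by simp
    have "primitive_part (smult a (cyc p)) = primitive_part A * primitive_part q"
      by (simp add: eq2 primitive_part_mult)
    hence "smult (sgn a) (cyc p) = primitive_part A * primitive_part q"
      using p0 by (simp add: primitive_part_smult content_cyc primitive_part_prim)
    hence "smult (sgn a) (smult (sgn a) (cyc p)) = primitive_part A * smult (sgn a) (primitive_part q)"
      by (simp add: mult_smult_right)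
    moreover have "sgn a * sgn a = 1" using a by (simp add: sgn_if)
    ultimately have fac: "cyc p = primitive_part A * smult (sgn a) (primitive_part q)"
      by (simp add: smult_smult)
    have dA: "degree A \<noteq> 0"
    proof
      assume "degree A = 0"
      then obtain c where "A = [:c:]" by (metis degree_eq_zeroE)
      thus False using less.prems by (simp add: map_poly_pCons)
    qed
    from cyc_no_factor[OF pr fac] dA have d0: "degree (smult (sgn a) (primitive_part q)) = 0" by simp
    have "primitive_part A \<noteq> 0" "smult (sgn a) (primitive_part q) \<noteq> 0"
    proof -
      have "cyc p \<noteq> 0" using p0 by (metis coeff_0 coeff_cyc zero_less_one less_trans zero_neq_one)
      thus "primitive_part A \<noteq> 0" "smult (sgn a) (primitive_part q) \<noteq> 0" using fac by auto
    qed
    hence "degree (cyc p) = degree A + 0"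
      using fac d0 by (simp add: degree_mult_eq)
    thus ?thesis using p0 by (simp add: degree_cyc)
  qed
qed

lemma indep_int:
  fixes z :: complex and b :: "nat \<Rightarrow> int"
  assumes pr: "prime p" and z: "z^p = 1" "z \<noteq> 1"
    and s: "(\<Sum>m<p. of_int (b m) * z^m) = 0"
  shows "\<forall>m<p. b m = b (p - 1)"
proof -
  have p0: "p > 1" using pr prime_gt_1_nat by blast
  define C where "C = (\<Sum>m<p. monom (b m - b (p - 1)) m)"
  have cC: "coeff C i = (if i < p then b i - b (p - 1) else 0)" for i
    unfolding C_def coeff_monoms by simp
  have "poly (ip C) z = (\<Sum>m<p. of_int (b m - b (p - 1)) * z^m)"
    unfolding C_def by (simp add: ip_sum poly_sum poly_monom ip_monom)
  also have "\<dots> = (\<Sum>m<p. of_int (b m) * z^m) - of_int (b (p - 1)) * (\<Sum>m<p. z^m)"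
    by (simp add: algebra_simps sum_subtractf sum_distrib_left sum_distrib_right)
  also have "(\<Sum>m<p. z^m) = 0"
  proof -
    have "(z - 1) * (\<Sum>m<p. z^m) = 0" using z by (simp add: power_diff_1_eq[symmetric])
    thus ?thesis using z by simp
  qed
  finally have Cz: "poly (ip C) z = 0" using s by simp
  have "C = 0"
  proof (rule ccontr)
    assume C0: "C \<noteq> 0"
    from root_deg[OF pr z C0 Cz] have "p - 1 \<le> degree C" .
    moreover have "coeff C (degree C) = 0"
    proof (cases "degree C < p - 1")
      case False
      hence "degree C = p - 1 \<or> p \<le> degree C" by linarith
      thus ?thesis using cC by auto
    qed (use \<open>p - 1 \<le> degree C\<close> in auto)
    ultimately show False using C0 by simp
  qed
  thus ?thesis using cC by (metis coeff_0 eq_iff_diff_eq_0)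
qed




lemma mult_bij:
  fixes n c :: nat
  assumes pr: "prime n" and c: "c mod n \<noteq> 0"
  shows "bij_betw (\<lambda>k. c * k mod n) {..<n} {..<n}"
proof -
  have n0: "n > 0" using pr prime_gt_0_nat by blast
  have cop: "coprime c n"
    using pr c by (metis dvd_eq_mod_eq_0 prime_imp_coprime_nat coprime_commute)
  have inj: "inj_on (\<lambda>k. c * k mod n) {..<n}"
  proof (rule inj_onI)
    fix a b assume a: "a \<in> {..<n}" and b: "b \<in> {..<n}" and e: "c * a mod n = c * b mod n"
    hence "[c * a = c * b] (mod n)" by (simp add: cong_def)
    hence "[a = b] (mod n)" using cop by (simp add: cong_mult_lcancel_nat)
    thus "a = b" using a b cong_less_modulus_unique_nat by auto
  qed
  have sub: "(\<lambda>k. c * k mod n) ` {..<n} \<subseteq> {..<n}" using n0 by auto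
  have "(\<lambda>k. c * k mod n) ` {..<n} = {..<n}" by (rule endo_inj_surj[OF _ sub inj]) simp
  thus ?thesis using inj by (simp add: bij_betw_def)
qed

lemma walk_mult:
  assumes pr: "prime n" and c: "c mod n \<noteq> 0"
    and inv: "\<forall>k<n. \<gamma> k = \<gamma> (c * k mod n)"
  shows "walk_prob n \<gamma> (\<lambda>k. f (c * k mod n)) w x = walk_prob n \<gamma> f w (c * x mod n)"
proof (induction w arbitrary: x)
  case Nil
  then show ?case by simp
next
  case (Cons b ws)
  let ?W = "walk_prob n \<gamma> f ws"
  have "(\<Sum>k<n. \<gamma> k * walk_prob n \<gamma> (\<lambda>k. f (c * k mod n)) ws ((x + k) mod n))
      = (\<Sum>k<n. \<gamma> (c * k mod n) * ?W ((c * x mod n + c * k mod n) mod n))"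
  proof (rule sum.cong[OF refl])
    fix k assume k: "k \<in> {..<n}"
    have "c * ((x + k) mod n) mod n = (c * x mod n + c * k mod n) mod n"
      by (metis mod_add_eq mod_mult_right_eq distrib_left)
    moreover have "\<gamma> k = \<gamma> (c * k mod n)" using inv k by blast
    ultimately show "\<gamma> k * walk_prob n \<gamma> (\<lambda>k. f (c * k mod n)) ws ((x + k) mod n)
        = \<gamma> (c * k mod n) * ?W ((c * x mod n + c * k mod n) mod n)"
      using Cons.IH by (simp del: walk_prob.simps)
  qed
  also have "\<dots> = (\<Sum>j<n. \<gamma> j * ?W ((c * x mod n + j) mod n))"
    using sum.reindex_bij_betw[OF mult_bij[OF pr c], of "\<lambda>j. \<gamma> j * ?W ((c * x mod n + j) mod n)"]
    by simp
  finally show ?case by simp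
qed

lemma same_law_mult:
  assumes pr: "prime n" and c: "c mod n \<noteq> 0"
    and inv: "\<forall>k<n. \<gamma> k = \<gamma> (c * k mod n)"
  shows "same_law n \<gamma> f (\<lambda>k. f (c * k mod n))"
  unfolding same_law_def seq_prob_def
proof
  fix w
  have "(\<Sum>x<n. walk_prob n \<gamma> (\<lambda>k. f (c * k mod n)) w x) = (\<Sum>x<n. walk_prob n \<gamma> f w (c * x mod n))"
    using walk_mult[OF pr c inv] by simp
  also have "\<dots> = (\<Sum>x<n. walk_prob n \<gamma> f w x)"
    using sum.reindex_bij_betw[OF mult_bij[OF pr c], of "walk_prob n \<gamma> f w"] by simp
  finally show "(\<Sum>x<n. walk_prob n \<gamma> f w x) / real n =
        (\<Sum>x<n. walk_prob n \<gamma> (\<lambda>k. f (c * k mod n)) w x) / real n" by simp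
qed

lemma not_shift_general:
  assumes pr: "prime n" and c1: "1 < c" and cn: "c < n - 1"
  shows "\<not> is_shift n (\<lambda>k. k = 0 \<or> k = 1) (\<lambda>j. (\<lambda>k. k = 0 \<or> k = 1) (c * j mod n))"
proof
  assume "is_shift n (\<lambda>k. k = 0 \<or> k = 1) (\<lambda>j. (\<lambda>k. k = 0 \<or> k = 1) (c * j mod n))"
  then obtain l where l: "l < n" and h: "\<forall>k<n. (k = 0 \<or> k = 1) = (c * ((k + l) mod n) mod n = 0 \<or> c * ((k + l) mod n) mod n = 1)"
    unfolding is_shift_def by blast
  have n2: "n > 2" using cn c1 by simp
  have h0: "c * l mod n = 0 \<or> c * l mod n = 1" using h[rule_format, of 0] n2 l by simp
  have h1: "c * ((1 + l) mod n) mod n = 0 \<or> c * ((1 + l) mod n) mod n = 1" using h[rule_format, of 1] n2 by simp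
  have e1: "c * ((1 + l) mod n) mod n = (c * l mod n + c) mod n"
    by (metis mod_add_eq mod_mult_right_eq distrib_left mult.right_neutral add.commute mod_mod_trivial mod_add_left_eq)
  show False
  proof (cases "c * l mod n = 0")
    case True
    hence "n dvd c * l" by auto
    hence "n dvd c \<or> n dvd l" using pr by (simp add: prime_dvd_mult_iff)
    hence "l = 0" using l c1 cn by (auto dest: dvd_imp_le)
    thus False using h1 c1 cn n2 by simp
  next
    case False
    hence "c * l mod n = 1" using h0 by simp
    hence "(1 + c) mod n = 0 \<or> (1 + c) mod n = 1" using h1 e1 by simp
    thus False using c1 cn by simp
  qed
qed

lemma not_shift_neg:
  assumes n: "n > 5"
  shows "\<not> is_shift n (\<lambda>k. k = 0 \<or> k = 1 \<or> k = 3) (\<lambda>j. (\<lambda>k. k = 0 \<or> k = 1 \<or> k = 3) ((n - 1) * j mod n))"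
proof
  have key: "(n - 1) * j mod n = (if j = 0 then 0 else n - j)" if "j < n" for j
  proof (cases "j = 0")
    case False
    have "(n - 1) * j = (n - j) + n * (j - 1)" using that False
      by (simp add: algebra_simps diff_mult_distrib2 diff_mult_distrib)
    hence "(n - 1) * j mod n = (n - j) mod n" by simp
    thus ?thesis using False that by simp
  qed simp
  assume "is_shift n (\<lambda>k. k = 0 \<or> k = 1 \<or> k = 3) (\<lambda>j. (\<lambda>k. k = 0 \<or> k = 1 \<or> k = 3) ((n - 1) * j mod n))"
  then obtain l where l: "l < n" and h: "\<forall>k<n. (k = 0 \<or> k = 1 \<or> k = 3) = ((n - 1) * ((k + l) mod n) mod n \<in> {0,1,3})"
    unfolding is_shift_def by auto
  have g: "(k = 0 \<or> k = 1 \<or> k = 3) = ((if (k + l) mod n = 0 then 0 else n - (k + l) mod n) \<in> {0,1,3})"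
    if "k < n" for k
  proof -
    have e: "(n - 1) * ((k + l) mod n) mod n = (if (k + l) mod n = 0 then 0 else n - (k + l) mod n)"
      by (rule key) (use n in simp)
    from h[rule_format, OF that] show ?thesis unfolding e .
  qed
  have l0: "(0 + l) mod n = l" using l by simp
  have u0: "(if l = 0 then 0 else n - l) \<in> {0,1,3::nat}" using g[of 0] n unfolding l0 by simp
  have t1: "(if (1 + l) mod n = 0 then 0 else n - (1 + l) mod n) \<in> {0,1,3::nat}" using g[of 1] n by simp
  have t3: "(if (3 + l) mod n = 0 then 0 else n - (3 + l) mod n) \<in> {0,1,3::nat}" using g[of 3] n by simp
  have "l = 0 \<or> l = n - 1 \<or> l = n - 3" using u0 l by (auto split: if_splits)
  moreover have "l \<noteq> 0"
  proof
    assume "l = 0"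
    hence e: "(1 + l) mod n = 1" using n by simp
    have "(if 1 = (0::nat) then 0 else n - 1) \<in> {0,1,3::nat}" using t1 unfolding e .
    thus False using n by (auto split: if_splits)
  qed
  moreover have "l \<noteq> n - 1"
  proof
    assume "l = n - 1"
    hence "3 + l = n + 2" using n by linarith
    hence "(3 + l) mod n = (n + 2) mod n" by (simp only:)
    also have "\<dots> = 2 mod n" by (rule mod_add_self1)
    also have "\<dots> = 2" using n by simp
    finally have e: "(3 + l) mod n = 2" .
    have "(if 2 = (0::nat) then 0 else n - 2) \<in> {0,1,3::nat}" using t3 unfolding e .
    thus False using n by (auto split: if_splits)
  qed
  moreover have "l \<noteq> n - 3"
  proof
    assume "l = n - 3"
    hence "1 + l = n - 2" using n by linarith
    hence e: "(1 + l) mod n = n - 2" using n by simp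
    have "(if n - 2 = (0::nat) then 0 else n - (n - 2)) \<in> {0,1,3::nat}" using t1 unfolding e .
    thus False using n by (auto split: if_splits)
  qed
  ultimately show False by blast
qed




lemma common_denom:
  fixes a :: "nat \<Rightarrow> real"
  shows "(\<forall>m<p. a m \<in> \<rat>) \<Longrightarrow> \<exists>D::int. D > 0 \<and> (\<forall>m<p. of_int D * a m \<in> \<int>)"
proof (induction p)
  case 0
  then show ?case by (intro exI[of _ 1]) simp
next
  case (Suc p)
  then obtain D :: int where D: "D > 0" "\<forall>m<p. of_int D * a m \<in> \<int>" by auto
  have "a p \<in> \<rat>" using Suc.prems by simp
  then obtain u v :: int where uv: "v > 0" "a p = of_int u / of_int v" by (rule Rats_cases')
  have "\<forall>m<Suc p. of_int (D * v) * a m \<in> \<int>"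
  proof (intro allI impI)
    fix m assume "m < Suc p"
    show "of_int (D * v) * a m \<in> \<int>"
    proof (cases "m = p")
      case True
      have e: "of_int (D * v) * a m = of_int (D * u)" using True uv by (simp add: field_simps)
      show ?thesis by (subst e) (rule Ints_of_int)
    next
      case False
      hence "m < p" using \<open>m < Suc p\<close> by simp
      hence "of_int D * a m \<in> \<int>" using D(2) by blast
      hence "of_int v * (of_int D * a m) \<in> \<int>" by (rule Ints_mult[OF Ints_of_int])
      thus ?thesis by (simp add: ac_simps)
    qed
  qed
  thus ?case using D uv by (intro exI[of _ "D * v"]) simp
qed

lemma indep_rat:
  fixes z :: complex and a :: "nat \<Rightarrow> real"
  assumes pr: "prime p" and z: "z^p = 1" "z \<noteq> 1"
    and q: "\<forall>m<p. a m \<in> \<rat>"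
    and s: "(\<Sum>m<p. of_real (a m) * z^m) = 0"
  shows "\<forall>m<p. a m = a 0"
proof -
  have p0: "p > 1" using pr prime_gt_1_nat by blast
  obtain D :: int where D: "D > 0" "\<forall>m<p. of_int D * a m \<in> \<int>" using common_denom[OF q] by auto
  define b where "b m = \<lfloor>of_int D * a m\<rfloor>" for m
  have bm: "real_of_int (b m) = of_int D * a m" if "m < p" for m
    using D(2) that unfolding b_def by (metis Ints_cases floor_of_int)
  have "(\<Sum>m<p. of_int (b m) * z^m) = (\<Sum>m<p. of_int D * (of_real (a m) * z^m))"
  proof (rule sum.cong[OF refl])
    fix m assume "m \<in> {..<p}"
    hence "complex_of_int (b m) = of_real (of_int D * a m)" using bm
      by (metis lessThan_iff of_real_of_int_eq)
    thus "of_int (b m) * z^m = of_int D * (of_real (a m) * z^m)" by simp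
  qed
  also have "\<dots> = 0" using s by (simp add: sum_distrib_left[symmetric])
  finally have B: "\<forall>m<p. b m = b (p - 1)" by (rule indep_int[OF pr z])
  have A: "a m = a (p - 1)" if m: "m < p" for m
  proof -
    have "real_of_int D * a m = real_of_int D * a (p - 1)"
      using bm[OF m] bm[of "p - 1"] B m p0 by (metis diff_less zero_less_one less_trans)
    thus ?thesis using D(1) by simp
  qed
  show ?thesis
  proof (intro allI impI)
    fix m assume "m < p"
    thus "a m = a 0" using A[of m] A[of 0] p0 by simp
  qed
qed




lemma modinv: "(a * b) mod n = (1::nat) \<Longrightarrow> (b * ((a * k) mod n)) mod n = k mod n"
proof -
  assume h: "(a * b) mod n = 1"
  have "(b * ((a * k) mod n)) mod n = (b * (a * k)) mod n" by (simp add: mod_mult_right_eq)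
  also have "\<dots> = ((a * b) * k) mod n" by (simp add: ac_simps)
  also have "\<dots> = (((a * b) mod n) * k) mod n" by (simp add: mod_mult_left_eq)
  also have "\<dots> = k mod n" using h by simp
  finally show ?thesis .
qed

lemma inverse_ex:
  fixes n x :: nat
  assumes pr: "prime n" and x: "x mod n \<noteq> 0"
  shows "\<exists>x'<n. (x * x') mod n = 1"
proof -
  have "(\<lambda>k. x * k mod n) ` {..<n} = {..<n}"
    using mult_bij[OF pr x] by (simp add: bij_betw_def)
  moreover have "1 \<in> {..<n}" using pr prime_gt_1_nat by auto
  ultimately have "1 \<in> (\<lambda>k. x * k mod n) ` {..<n}" by simp
  then obtain x' where "x' \<in> {..<n}" "1 = x * x' mod n" by (rule imageE)
  thus ?thesis by auto
qed

lemma zeta_pow: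
  assumes "n > 0"
  shows "exp (- 2 * pi * \<i> / of_nat n) ^ n = 1"
proof -
  have "exp (- 2 * pi * \<i> / of_nat n) ^ n = exp (of_nat n * (- 2 * pi * \<i> / of_nat n))"
    by (rule exp_of_nat_mult[symmetric])
  also have "of_nat n * (- 2 * pi * \<i> / of_nat n) = - (2 * pi * \<i>)" using assms by simp
  also have "exp (- (2 * pi * \<i>)) = 1" by (simp add: exp_minus)
  finally show ?thesis .
qed

lemma zeta_ne1:
  assumes "n > 1"
  shows "exp (- 2 * pi * \<i> / of_nat n) \<noteq> 1"
proof
  assume "exp (- 2 * pi * \<i> / of_nat n) = 1"
  then obtain k :: int where "Im (- 2 * pi * \<i> / of_nat n) = of_int (2 * k) * pi"
    by (auto simp: exp_eq_1)
  hence "- 2 * pi / real n = of_int (2 * k) * pi" by simp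
  hence "- 2 * pi = of_int (2 * k) * pi * real n" using assms by (simp add: field_simps)
  hence "pi * (real_of_int (k * int n) + 1) = 0" by (simp add: algebra_simps)
  hence "real_of_int (k * int n) + 1 = 0" using pi_gt_zero by simp
  hence "real_of_int (k * int n) = real_of_int (-1)" by simp
  hence "k * int n = -1" by (simp only: of_int_eq_iff)
  hence "int n dvd 1" by (metis dvd_minus_iff dvd_triv_right)
  thus False using assms by simp
qed

lemma zeta_term:
  assumes "n > 0"
  shows "exp (- 2 * pi * \<i> * of_nat m / of_nat n) = exp (- 2 * pi * \<i> / of_nat n) ^ (m mod n)"
proof -
  let ?z = "exp (- 2 * pi * \<i> / of_nat n)"
  have "exp (- 2 * pi * \<i> * of_nat m / of_nat n) = exp (of_nat m * (- 2 * pi * \<i> / of_nat n))"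
    by (simp add: field_simps)
  also have "\<dots> = ?z ^ m" by (rule exp_of_nat_mult)
  also have "?z ^ m = ?z ^ (m mod n)"
  proof -
    have "?z ^ m = ?z ^ (n * (m div n) + m mod n)" by simp
    also have "\<dots> = ?z ^ (m mod n)"
      by (simp only: power_add power_mult zeta_pow[OF assms] power_one mult_1)
    finally show ?thesis .
  qed
  finally show ?thesis .
qed

lemma fourier_alt:
  assumes "n > 0"
  shows "fourier n \<gamma> x = (\<Sum>k<n. of_real (\<gamma> k) * exp (- 2 * pi * \<i> / of_nat n) ^ (k * x mod n))"
  unfolding fourier_def
proof (rule sum.cong[OF refl])
  fix k
  show "exp (- 2 * pi * \<i> * of_nat (k * x) / of_nat n) * of_real (\<gamma> k) =
    of_real (\<gamma> k) * exp (- 2 * pi * \<i> / of_nat n) ^ (k * x mod n)"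
    by (subst zeta_term[OF assms]) (rule mult.commute)
qed

lemma fourier_reindex:
  assumes pr: "prime n" and inv: "(x * x') mod n = 1"
  shows "fourier n \<gamma> x = (\<Sum>m<n. of_real (\<gamma> (x' * m mod n)) * exp (- 2 * pi * \<i> / of_nat n) ^ m)"
proof -
  let ?z = "exp (- 2 * pi * \<i> / of_nat n)"
  have n0: "n > 1" using pr prime_gt_1_nat by blast
  have x': "x' mod n \<noteq> 0"
  proof
    assume "x' mod n = 0"
    hence "(x * x') mod n = 0" by (simp add: mod_mult_right_eq[symmetric])
    thus False using inv by simp
  qed
  let ?F = "\<lambda>k. of_real (\<gamma> k) * ?z ^ (k * x mod n)"
  have "fourier n \<gamma> x = (\<Sum>k<n. ?F k)" using fourier_alt n0 by simp
  also have "\<dots> = (\<Sum>m<n. ?F (x' * m mod n))"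
    using sum.reindex_bij_betw[OF mult_bij[OF pr x'], of ?F] by simp
  also have "\<dots> = (\<Sum>m<n. of_real (\<gamma> (x' * m mod n)) * ?z ^ m)"
  proof (rule sum.cong[OF refl])
    fix m assume m: "m \<in> {..<n}"
    have "(x' * m mod n) * x mod n = (x * ((x' * m) mod n)) mod n" by (simp add: mult.commute)
    also have "\<dots> = m mod n"
    proof -
      have "(x' * x) mod n = 1" using inv by (simp add: mult.commute)
      thus ?thesis by (rule modinv)
    qed
    also have "\<dots> = m" using m by simp
    finally show "?F (x' * m mod n) = of_real (\<gamma> (x' * m mod n)) * ?z ^ m" by simp
  qed
  finally show ?thesis .
qed




lemma key_case0:
  assumes pr: "prime n" and n5: "n > 5" and sd: "step_dist n \<gamma>"
    and rat: "\<forall>k<n. \<gamma> k \<in> \<rat>"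
    and y: "y < n" "y \<noteq> 0" and eq: "fourier n \<gamma> 0 = fourier n \<gamma> y"
  shows "\<forall>k<n. \<gamma> k = \<gamma> (2 * k mod n)"
proof -
  let ?z = "exp (- 2 * pi * \<i> / of_nat n)"
  have n1: "n > 1" using n5 by simp
  have ymod: "y mod n \<noteq> 0" using y by simp
  obtain y' where y': "y' < n" "(y * y') mod n = 1" using inverse_ex[OF pr ymod] by blast
  have f0: "fourier n \<gamma> 0 = 1"
  proof -
    have "fourier n \<gamma> 0 = (\<Sum>k<n. of_real (\<gamma> k))" unfolding fourier_def by simp
    also have "\<dots> = of_real (\<Sum>k<n. \<gamma> k)" by simp
    also have "(\<Sum>k<n. \<gamma> k) = 1" using sd unfolding step_dist_def by simp
    finally show ?thesis by simp
  qed
  define a where "a m = (if m = 0 then 1 else 0) - \<gamma> (y' * m mod n)" for m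
  have s1: "(\<Sum>m<n. of_real (if m = 0 then 1 else 0) * ?z ^ m) = (1::complex)"
  proof -
    have "(\<Sum>m<n. of_real (if m = 0 then 1 else 0) * ?z ^ m) = (\<Sum>m<n. if m = 0 then 1 else (0::complex))"
      by (rule sum.cong) auto
    also have "\<dots> = 1" using n1 by simp
    finally show ?thesis .
  qed
  have "(\<Sum>m<n. of_real (a m) * ?z ^ m) =
      (\<Sum>m<n. of_real (if m = 0 then 1 else 0) * ?z ^ m) - (\<Sum>m<n. of_real (\<gamma> (y' * m mod n)) * ?z ^ m)"
    unfolding a_def by (simp add: sum_subtractf algebra_simps)
  also have "\<dots> = fourier n \<gamma> 0 - fourier n \<gamma> y"
    using s1 f0 fourier_reindex[OF pr y'(2)] by simp
  finally have S: "(\<Sum>m<n. of_real (a m) * ?z ^ m) = 0" using eq by simp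
  have Q: "\<forall>m<n. a m \<in> \<rat>"
  proof (intro allI impI)
    fix m assume "m < n"
    have "y' * m mod n < n" using n1 by simp
    hence "\<gamma> (y' * m mod n) \<in> \<rat>" using rat by blast
    thus "a m \<in> \<rat>" unfolding a_def by (intro Rats_diff) auto
  qed
  have n0: "n > 0" using n1 by simp
  have A: "\<forall>m<n. a m = a 0"
    by (rule indep_rat[OF pr zeta_pow[OF n0] zeta_ne1[OF n1] Q S])
  have zero: "\<gamma> k = 0" if k: "k < n" "k \<noteq> 0" for k
  proof -
    define m where "m = y * k mod n"
    have mn: "m < n" using n1 unfolding m_def by simp
    have "y' * m mod n = k mod n" unfolding m_def by (rule modinv[OF y'(2)])
    hence ym: "y' * m mod n = k" using k by simp
    have "m \<noteq> 0"
    proof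
      assume "m = 0"
      hence "n dvd y * k" unfolding m_def by auto
      hence "n dvd y \<or> n dvd k" using pr by (simp add: prime_dvd_mult_iff)
      thus False using y k by (auto dest: dvd_imp_le)
    qed
    hence "a m = - \<gamma> k" unfolding a_def using ym by simp
    moreover have "a 0 = 1 - \<gamma> 0" unfolding a_def by simp
    moreover have "a m = a 0" using A mn by blast
    ultimately have "\<gamma> k = \<gamma> 0 - 1" by simp
    moreover have "\<gamma> 0 \<le> 1" "\<gamma> k \<ge> 0" using sd n1 k unfolding step_dist_def by auto
    ultimately show ?thesis by simp
  qed
  show ?thesis
  proof (intro allI impI)
    fix k assume k: "k < n"
    show "\<gamma> k = \<gamma> (2 * k mod n)"
    proof (cases "k = 0")
      case False
      have "2 * k mod n \<noteq> 0"
      proof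
        assume "2 * k mod n = 0"
        hence "n dvd 2 * k" by auto
        hence "n dvd 2 \<or> n dvd k" using pr by (simp add: prime_dvd_mult_iff)
        thus False using n5 k False by (auto dest: dvd_imp_le)
      qed
      moreover have "2 * k mod n < n" using n1 by simp
      ultimately show ?thesis using zero[OF k False] zero[of "2 * k mod n"] by simp
    qed simp
  qed
qed

lemma key_case1:
  assumes pr: "prime n" and n5: "n > 5"
    and rat: "\<forall>k<n. \<gamma> k \<in> \<rat>"
    and x: "x < n" "x \<noteq> 0" and y: "y < n" "y \<noteq> 0" and xy: "x \<noteq> y"
    and eq: "fourier n \<gamma> x = fourier n \<gamma> y"
  shows "\<exists>c. 1 < c \<and> c < n \<and> (\<forall>k<n. \<gamma> k = \<gamma> (c * k mod n))"
proof -
  let ?z = "exp (- 2 * pi * \<i> / of_nat n)"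
  have n1: "n > 1" using n5 by simp
  have xmod: "x mod n \<noteq> 0" using x by simp
  have ymod: "y mod n \<noteq> 0" using y by simp
  obtain x' where x': "x' < n" "(x * x') mod n = 1" using inverse_ex[OF pr xmod] by blast
  obtain y' where y': "y' < n" "(y * y') mod n = 1" using inverse_ex[OF pr ymod] by blast
  define a where "a m = \<gamma> (x' * m mod n) - \<gamma> (y' * m mod n)" for m
  have "(\<Sum>m<n. of_real (a m) * ?z ^ m) =
      (\<Sum>m<n. of_real (\<gamma> (x' * m mod n)) * ?z ^ m) - (\<Sum>m<n. of_real (\<gamma> (y' * m mod n)) * ?z ^ m)"
    unfolding a_def by (simp add: sum_subtractf algebra_simps)
  also have "\<dots> = fourier n \<gamma> x - fourier n \<gamma> y"
    using fourier_reindex[OF pr y'(2)] fourier_reindex[OF pr x'(2)] by simp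
  finally have S: "(\<Sum>m<n. of_real (a m) * ?z ^ m) = 0" using eq by simp
  have Q: "\<forall>m<n. a m \<in> \<rat>"
  proof (intro allI impI)
    fix m assume "m < n"
    have "x' * m mod n < n" "y' * m mod n < n" using n1 by simp_all
    hence "\<gamma> (x' * m mod n) \<in> \<rat>" "\<gamma> (y' * m mod n) \<in> \<rat>" using rat by blast+
    thus "a m \<in> \<rat>" unfolding a_def by (intro Rats_diff)
  qed
  have n0: "n > 0" using n1 by simp
  have A: "\<forall>m<n. a m = a 0"
    by (rule indep_rat[OF pr zeta_pow[OF n0] zeta_ne1[OF n1] Q S])
  define c where "c = y' * x mod n"
  have inv: "\<gamma> k = \<gamma> (c * k mod n)" if k: "k < n" for k
  proof -
    define m where "m = x * k mod n"
    have mn: "m < n" using n1 unfolding m_def by simp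
    have "x' * m mod n = k mod n" unfolding m_def by (rule modinv[OF x'(2)])
    hence e1: "x' * m mod n = k" using k by simp
    have "y' * m mod n = (y' * x) * k mod n" unfolding m_def
      by (metis mod_mult_right_eq mult.assoc)
    also have "\<dots> = c * k mod n" unfolding c_def by (simp add: mod_mult_left_eq)
    finally have e2: "y' * m mod n = c * k mod n" .
    have "a m = a 0" using A mn by blast
    hence "a m = 0" unfolding a_def by simp
    thus ?thesis unfolding a_def using e1 e2 by simp
  qed
  have cn: "c < n" unfolding c_def using n1 by simp
  have c0: "c \<noteq> 0"
  proof
    assume "c = 0"
    hence "n dvd y' * x" unfolding c_def by auto
    hence "n dvd y' \<or> n dvd x" using pr by (simp add: prime_dvd_mult_iff)
    moreover have "\<not> n dvd y'"
    proof
      assume "n dvd y'"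
      hence "n dvd y * y'" by simp
      hence "(y * y') mod n = 0" by simp
      thus False using y' by simp
    qed
    ultimately show False using x by (auto dest: dvd_imp_le)
  qed
  have c1: "c \<noteq> 1"
  proof
    assume "c = 1"
    hence "(y' * x) mod n = 1" unfolding c_def .
    from modinv[OF this, of y] have "(x * ((y' * y) mod n)) mod n = y mod n" .
    moreover have "(y' * y) mod n = 1" using y' by (simp add: mult.commute)
    ultimately have "x mod n = y mod n" by simp
    thus False using x y xy by simp
  qed
  have "1 < c" using c0 c1 by simp
  thus ?thesis using inv cn by blast
qed




lemma key:
  assumes pr: "prime n" and n5: "n > 5" and sd: "step_dist n \<gamma>"
    and rat: "\<forall>k<n. \<gamma> k \<in> \<rat>"
    and x: "x < n" and y: "y < n" "y \<noteq> 0" and xy: "x \<noteq> y"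
    and eq: "fourier n \<gamma> x = fourier n \<gamma> y"
  shows "\<exists>c. 1 < c \<and> c < n \<and> (\<forall>k<n. \<gamma> k = \<gamma> (c * k mod n))"
proof (cases "x = 0")
  case True
  have "fourier n \<gamma> 0 = fourier n \<gamma> y" using eq True by simp
  hence "\<forall>k<n. \<gamma> k = \<gamma> (2 * k mod n)" by (rule key_case0[OF pr n5 sd rat y])
  moreover have "(1::nat) < 2" "(2::nat) < n" using n5 by simp_all
  ultimately show ?thesis by blast
next
  case False
  show ?thesis by (rule key_case1[OF pr n5 rat x False y xy eq])
qed

theorem theorem2:
  fixes n :: nat and \<gamma> :: "nat \<Rightarrow> real"
  assumes "prime n" and "n > 5"
    and "step_dist n \<gamma>"
    and "\<forall>k<n. \<gamma> k \<in> \<rat>"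
    and "reconstructive n \<gamma>"
  shows "inj_on (fourier n \<gamma>) {..<n}"
proof (rule inj_onI, rule ccontr)
  note pr = assms(1) and n5 = assms(2) and sd = assms(3) and rat = assms(4) and rc = assms(5)
  fix x y assume x: "x \<in> {..<n}" and y: "y \<in> {..<n}" and eq: "fourier n \<gamma> x = fourier n \<gamma> y"
    and xy: "x \<noteq> y"
  have "\<exists>c. 1 < c \<and> c < n \<and> (\<forall>k<n. \<gamma> k = \<gamma> (c * k mod n))"
  proof (cases "y = 0")
    case False
    thus ?thesis using key[OF pr n5 sd rat _ _ False xy eq] x y by simp
  next
    case True
    hence "x \<noteq> 0" using xy by simp
    thus ?thesis using key[OF pr n5 sd rat _ _ \<open>x \<noteq> 0\<close> _ eq[symmetric]] x y xy by simp
  qed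
  then obtain c where c: "1 < c" "c < n" and inv: "\<forall>k<n. \<gamma> k = \<gamma> (c * k mod n)" by blast
  have cm: "c mod n \<noteq> 0" using c by simp
  show False
  proof (cases "c = n - 1")
    case True
    let ?f = "\<lambda>k::nat. k = 0 \<or> k = 1 \<or> k = 3"
    have "same_law n \<gamma> ?f (\<lambda>k. ?f (c * k mod n))" by (rule same_law_mult[OF pr cm inv])
    hence "is_shift n ?f (\<lambda>k. ?f (c * k mod n))" using rc unfolding reconstructive_def by blast
    hence "is_shift n ?f (\<lambda>k. ?f ((n - 1) * k mod n))" by (simp only: True)
    with not_shift_neg[OF n5] show False by blast
  next
    case False
    hence c2: "c < n - 1" using c by simp
    let ?f = "\<lambda>k::nat. k = 0 \<or> k = 1"
    have "same_law n \<gamma> ?f (\<lambda>k. ?f (c * k mod n))" by (rule same_law_mult[OF pr cm inv])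
    hence "is_shift n ?f (\<lambda>k. ?f (c * k mod n))" using rc unfolding reconstructive_def by blast
    with not_shift_general[OF pr c(1) c2] show False by blast
  qed
qed


end
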